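(* Let $A=\{0,1,2\}$ and let $T\colon A^4\to A$ be given by $T(1,1,2,2)=T(1,2,1,2)=1$ and $T(\mathbf{x})=0$ for all other $\mathbf{x}\in A^4$. Then \[\langle\{T\}\rangle^{(2)}=\{e^2_1,e^2_2,c^2_0,\delta_{(1,2)},\delta_{(2,1)}\},\] where $e^2_1(x,y)=x$, $e^2_2(x,y)=y$, $c^2_0$ is the binary constant zero function, and for $\mathbf{a}\in A^2$, $\delta_{\mathbf{a}}(\mathbf{x})=1$ if $\mathbf{x}=\mathbf{a}$ and $\delta_{\mathbf{a}}(\mathbf{x})=0$ otherwise.
   Context: $\langle\{T\}\rangle$ denotes the clone generated by $T$ (all term operations of positive arity of $(A;T)$, including projections), and $\langle\{T\}\rangle^{(2)}$ its binary members. *)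

theory Defs
  imports Main "HOL-Library.Numeral_Type"
begin

text \<open>The base set A = {0,1,2} is the three-element type 3 (elements 0, 1, 2).
An n-ary operation on A is represented as a function (nat => 3) => 3 that
reads only the arguments 0..n-1.\<close>

definition T :: "3 \<Rightarrow> 3 \<Rightarrow> 3 \<Rightarrow> 3 \<Rightarrow> 3" where
  "T x1 x2 x3 x4 =
     (if (x1, x2, x3, x4) = (1, 1, 2, 2) \<or> (x1, x2, x3, x4) = (1, 2, 1, 2) then 1 else 0)"

inductive_set termops :: "nat \<Rightarrow> ((nat \<Rightarrow> 3) \<Rightarrow> 3) set" for n :: nat where
  proj: "i < n \<Longrightarrow> (\<lambda>x. x i) \<in> termops n"
| comp: "\<lbrakk>f1 \<in> termops n; f2 \<in> termops n; f3 \<in> termops n; f4 \<in> termops n\<rbrakk>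
         \<Longrightarrow> (\<lambda>x. T (f1 x) (f2 x) (f3 x) (f4 x)) \<in> termops n"

definition cloneT :: "(nat \<times> ((nat \<Rightarrow> 3) \<Rightarrow> 3)) set" where
  "cloneT = {(n, f). 1 \<le> n \<and> f \<in> termops n}"

definition cloneT2 :: "(3 \<Rightarrow> 3 \<Rightarrow> 3) set" where
  "cloneT2 = {(\<lambda>x y. f (\<lambda>i. if i = 0 then x else y)) | f. (2, f) \<in> cloneT}"

definition e21 :: "3 \<Rightarrow> 3 \<Rightarrow> 3" where "e21 x y = x"
definition e22 :: "3 \<Rightarrow> 3 \<Rightarrow> 3" where "e22 x y = y"
definition c20 :: "3 \<Rightarrow> 3 \<Rightarrow> 3" where "c20 x y = 0"
definition delta2 :: "3 \<times> 3 \<Rightarrow> 3 \<Rightarrow> 3 \<Rightarrow> 3" where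
  "delta2 a x y = (if (x, y) = a then 1 else 0)"

end

theory Submission
  imports Defs
begin

definition S :: "(3 \<Rightarrow> 3 \<Rightarrow> 3) set" where
  "S = {e21, e22, c20, delta2 (1, 2), delta2 (2, 1)}"

lemma all3: "(\<forall>x::3. P x) = (P 0 \<and> P 1 \<and> P 2)"
proof -
  have "(x::3) = 0 \<or> x = 1 \<or> x = 2" for x
    proof (induct x)
      case (of_int z)
      then have "z = 0 \<or> z = 1 \<or> z = 2" by auto
      then show ?case by auto
    qed
  then show ?thesis by metis
qed
lemma ad:
  assumes "a \<in> S" "d \<in> S"
  shows "(\<forall>x y. a x y = 1 \<and> d x y = 2 \<longrightarrow> x = 2 \<and> y = 1) \<or> (\<forall>x y. a x y = 1 \<and> d x y = 2 \<longrightarrow> x = 1 \<and> y = 2)"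
  using assms unfolding S_def insert_iff empty_iff
  by (elim disjE; simp add: all3 e21_def e22_def c20_def delta2_def)

lemma h01:
  fixes h :: "3 \<Rightarrow> 3 \<Rightarrow> 3"
  assumes "\<forall>x y. h x y = 0 \<or> h x y = 1" "\<forall>x y. h x y = 1 \<longrightarrow> x = u \<and> y = v"
    "(u, v) = (2, 1) \<or> (u, v) = (1, 2)"
  shows "h \<in> S"
proof -
  have "h = c20 \<or> h = delta2 (u, v)"
  proof (cases "h u v = 1")
    case True
    have "h x y = delta2 (u, v) x y" for x y
    proof (cases "x = u \<and> y = v")
      case True then show ?thesis using \<open>h u v = 1\<close> by (simp add: delta2_def)
    next
      case False then have "h x y \<noteq> 1" using assms(2) by blast
      then have "h x y = 0" using assms(1) by blast
      then show ?thesis using False by (auto simp add: delta2_def)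
    qed
    then have "h = delta2 (u, v)" by (simp add: fun_eq_iff)
    then show ?thesis by simp
  next
    case False
    have "h x y = 0" for x y
    proof (cases "x = u \<and> y = v")
      case True then show ?thesis using False assms(1) by blast
    next
      case False then have "h x y \<noteq> 1" using assms(2) by blast
      then show ?thesis using assms(1) by blast
    qed
    then have "h = c20" by (simp add: fun_eq_iff c20_def)
    then show ?thesis by simp
  qed
  then show ?thesis using assms(3) by (auto simp: S_def)
qed

lemma closure:
  assumes "a \<in> S" "b \<in> S" "c \<in> S" "d \<in> S"
  shows "(\<lambda>x y. T (a x y) (b x y) (c x y) (d x y)) \<in> S"
proof -
  let ?h = "\<lambda>x y. T (a x y) (b x y) (c x y) (d x y)"
  have 1: "\<forall>x y. ?h x y = 0 \<or> ?h x y = 1" by (simp add: T_def)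
  have 2: "?h x y = 1 \<Longrightarrow> a x y = 1 \<and> d x y = 2" for x y
    by (auto simp add: T_def split: if_splits)
  from ad[OF assms(1,4)] show ?thesis
  proof
    assume A: "\<forall>x y. a x y = 1 \<and> d x y = 2 \<longrightarrow> x = 2 \<and> y = 1"
    have B: "\<forall>x y. ?h x y = 1 \<longrightarrow> x = 2 \<and> y = 1"
    proof (intro allI impI)
      fix x y assume "?h x y = 1"
      then have "a x y = 1 \<and> d x y = 2" by (rule 2)
      then show "x = 2 \<and> y = 1" using A by blast
    qed
    show ?thesis by (rule h01[OF 1 B]) simp
  next
    assume A: "\<forall>x y. a x y = 1 \<and> d x y = 2 \<longrightarrow> x = 1 \<and> y = 2"
    have B: "\<forall>x y. ?h x y = 1 \<longrightarrow> x = 1 \<and> y = 2"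
    proof (intro allI impI)
      fix x y assume "?h x y = 1"
      then have "a x y = 1 \<and> d x y = 2" by (rule 2)
      then show "x = 1 \<and> y = 2" using A by blast
    qed
    show ?thesis by (rule h01[OF 1 B]) simp
  qed
qed

lemma sub: "f \<in> termops n \<Longrightarrow> n = 2 \<Longrightarrow> (\<lambda>x y. f (\<lambda>i. if i = 0 then x else y)) \<in> S"
proof (induction f rule: termops.induct)
  case (proj i)
  then have "i = 0 \<or> i = 1" by auto
  then show ?case
  proof
    assume "i = 0"
    then have "(\<lambda>x y. (\<lambda>z. z i) (\<lambda>i. if i = (0::nat) then x else y)) = e21"
      by (simp add: fun_eq_iff e21_def)
    then show ?case by (simp add: S_def)
  next
    assume "i = 1"
    then have "(\<lambda>x y. (\<lambda>z. z i) (\<lambda>i. if i = (0::nat) then x else y)) = e22"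
      by (simp add: fun_eq_iff e22_def)
    then show ?case by (simp add: S_def)
  qed
next
  case (comp f1 f2 f3 f4)
  then show ?case using closure[of "\<lambda>x y. f1 (\<lambda>i. if i = 0 then x else y)"
      "\<lambda>x y. f2 (\<lambda>i. if i = 0 then x else y)" "\<lambda>x y. f3 (\<lambda>i. if i = 0 then x else y)"
      "\<lambda>x y. f4 (\<lambda>i. if i = 0 then x else y)"] by simp
qed

lemma p0: "(\<lambda>x. x 0) \<in> termops 2" by (rule termops.proj) simp
lemma p1: "(\<lambda>x. x 1) \<in> termops 2" by (rule termops.proj) simp

theorem lemma3p8:
  shows "cloneT2 = {e21, e22, c20, delta2 (1, 2), delta2 (2, 1)}"
proof
  show "cloneT2 \<subseteq> {e21, e22, c20, delta2 (1, 2), delta2 (2, 1)}"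
    using sub unfolding cloneT2_def cloneT_def S_def by auto
next
  have mem: "(\<lambda>x y. f (\<lambda>i. if i = 0 then x else y)) \<in> cloneT2" if "f \<in> termops 2" for f
    using that unfolding cloneT2_def cloneT_def by auto
  have "e21 \<in> cloneT2" using mem[OF p0] by (simp add: e21_def[abs_def])
  moreover have "e22 \<in> cloneT2" using mem[OF p1] by (simp add: e22_def[abs_def])
  moreover have "c20 \<in> cloneT2"
  proof -
    have "(\<lambda>x y. (\<lambda>z. T (z 0) (z 0) (z 0) (z 0)) (\<lambda>i. if i = (0::nat) then x else y)) = c20"
      by (simp add: fun_eq_iff T_def c20_def)
    then show ?thesis using mem[OF termops.comp[OF p0 p0 p0 p0]] by simp
  qed
  moreover have "delta2 (1, 2) \<in> cloneT2"
  proof -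
    have "(\<lambda>x y. (\<lambda>z. T (z 0) (z 0) (z 1) (z 1)) (\<lambda>i. if i = (0::nat) then x else y)) = delta2 (1, 2)"
      by (simp add: fun_eq_iff T_def delta2_def)
    then show ?thesis using mem[OF termops.comp[OF p0 p0 p1 p1]] by simp
  qed
  moreover have "delta2 (2, 1) \<in> cloneT2"
  proof -
    have "(\<lambda>x y. (\<lambda>z. T (z 1) (z 1) (z 0) (z 0)) (\<lambda>i. if i = (0::nat) then x else y)) = delta2 (2, 1)"
      by (simp add: fun_eq_iff T_def delta2_def)
    then show ?thesis using mem[OF termops.comp[OF p1 p1 p0 p0]] by simp
  qed
  ultimately show "{e21, e22, c20, delta2 (1, 2), delta2 (2, 1)} \<subseteq> cloneT2" by blast
qed

end
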